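(* Let $G=(V,E)$ be a directed multigraph with arc costs $c\in\mathbb{R}^E$ and gains $\gamma\in\mathbb{R}^E_{>0}$, $u\in V$, $\mathcal{D}:=\{x\in\mathbb{R}^E_{\ge0}: x(\delta^+(u))=1,\ \nabla x_v=0\ \forall v\ne u\}$, and $f(\delta):=\inf_{x\in\mathcal{D}}\big(c^\top x+\delta\sum_{e\in\delta^-(u)}\gamma_ex_e-\delta\big)$. For any $\delta\in\mathbb{R}$, $f(\delta)=-\infty$ if and only if $\mathcal{D}\ne\emptyset$ and the graph $G\setminus\delta^+(u)$ contains a negative unit-gain cycle, a negative bicycle, or a $(\delta,u)$-negative flow-generating cycle.
   Context: $\delta^\pm(v)$: arcs leaving/entering $v$; $\nabla x_v:=\sum_{e\in\delta^+(v)}x_e-\sum_{e\in\delta^-(v)}\gamma_ex_e$. For a walk $P$ with arcs $e_1,\dots,e_k$: $c(P):=\sum_{i=1}^k(\prod_{j<i}\gamma_{e_j})c_{e_i}$, $\gamma(P):=\prod_i\gamma_{e_i}$. A cycle at $v$ is a $v$-$v$ walk whose intermediate nodes are distinct; it is flow-generating if $\gamma(C)>1$, unit-gain if $\gamma(C)=1$, flow-absorbing if $\gamma(C)<1$; a unit-gain cycle is negative if $c(C)<0$. A bicycle is a walk $CPD$ where $C$ is a flow-generating cycle at $v$, $D$ a flow-absorbing cycle at $w$, and $P$ a $v$-$w$ path; it is negative if $c(P)+\gamma(P)\frac{c(D)}{1-\gamma(D)}<\frac{-c(C)}{\gamma(C)-1}$. A flow-generating cycle $C$ is $(\delta,u)$-negative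 if there is a path $P$ from a node $v\in V(C)$ to $u$ such that $c(C)+(\gamma(C)-1)(c(P)+\gamma(P)\delta)<0$, where $C$ is regarded as a cycle at $v$. *)

theory Defs
  imports Complex_Main "HOL-Library.Extended_Real"
begin

fun walk :: "('e \<Rightarrow> 'v) \<Rightarrow> ('e \<Rightarrow> 'v) \<Rightarrow> 'e set \<Rightarrow> 'v \<Rightarrow> 'e list \<Rightarrow> 'v \<Rightarrow> bool" where
  "walk tail head A v [] w \<longleftrightarrow> v = w"
| "walk tail head A v (e # es) w \<longleftrightarrow> e \<in> A \<and> tail e = v \<and> walk tail head A (head e) es w"

definition walk_nodes :: "('e \<Rightarrow> 'v) \<Rightarrow> 'v \<Rightarrow> 'e list \<Rightarrow> 'v list" where
  "walk_nodes head v es = v # map head es"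

definition is_path :: "('e \<Rightarrow> 'v) \<Rightarrow> ('e \<Rightarrow> 'v) \<Rightarrow> 'e set \<Rightarrow> 'v \<Rightarrow> 'e list \<Rightarrow> 'v \<Rightarrow> bool" where
  "is_path tail head A v es w \<longleftrightarrow> walk tail head A v es w \<and> distinct (walk_nodes head v es)"

definition is_cycle :: "('e \<Rightarrow> 'v) \<Rightarrow> ('e \<Rightarrow> 'v) \<Rightarrow> 'e set \<Rightarrow> 'v \<Rightarrow> 'e list \<Rightarrow> bool" where
  "is_cycle tail head A v es \<longleftrightarrow> es \<noteq> [] \<and> walk tail head A v es v
     \<and> distinct (butlast (walk_nodes head v es))"

text \<open>c(P) = sum_i (prod_{j<i} gamma_{e_j}) c_{e_i};  gamma(P) = prod_i gamma_{e_i}.\<close>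
fun wcost :: "('e \<Rightarrow> real) \<Rightarrow> ('e \<Rightarrow> real) \<Rightarrow> 'e list \<Rightarrow> real" where
  "wcost c \<gamma> [] = 0"
| "wcost c \<gamma> (e # es) = c e + \<gamma> e * wcost c \<gamma> es"

fun wgain :: "('e \<Rightarrow> real) \<Rightarrow> 'e list \<Rightarrow> real" where
  "wgain \<gamma> [] = 1"
| "wgain \<gamma> (e # es) = \<gamma> e * wgain \<gamma> es"

definition has_neg_unit_gain_cycle where
  "has_neg_unit_gain_cycle tail head A c \<gamma> \<longleftrightarrow>
     (\<exists>v C. is_cycle tail head A v C \<and> wgain \<gamma> C = 1 \<and> wcost c \<gamma> C < 0)"

definition has_neg_bicycle where
  "has_neg_bicycle tail head A c \<gamma> \<longleftrightarrow>
     (\<exists>v w C P D. is_cycle tail head A v C \<and> wgain \<gamma> C > 1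
        \<and> is_cycle tail head A w D \<and> wgain \<gamma> D < 1
        \<and> is_path tail head A v P w
        \<and> wcost c \<gamma> P + wgain \<gamma> P * (wcost c \<gamma> D / (1 - wgain \<gamma> D))
            < - wcost c \<gamma> C / (wgain \<gamma> C - 1))"

text \<open>(delta,u)-negative flow-generating cycle; quantifying over all cycles at all
  nodes v covers "C regarded as a cycle at v" for every v in V(C).\<close>
definition has_du_neg_fg_cycle where
  "has_du_neg_fg_cycle tail head A c \<gamma> \<delta> u \<longleftrightarrow>
     (\<exists>v C P. is_cycle tail head A v C \<and> wgain \<gamma> C > 1
        \<and> is_path tail head A v P u
        \<and> wcost c \<gamma> C + (wgain \<gamma> C - 1) * (wcost c \<gamma> P + wgain \<gamma> P * \<delta>) < 0)"

definition netflow :: "('e \<Rightarrow> 'v) \<Rightarrow> ('e \<Rightarrow> 'v) \<Rightarrow> 'e set \<Rightarrow> ('e \<Rightarrow> real) \<Rightarrow> ('e \<Rightarrow> real) \<Rightarrow> 'v \<Rightarrow> real" where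
  "netflow tail head E \<gamma> x v = (\<Sum>e\<in>{e\<in>E. tail e = v}. x e) - (\<Sum>e\<in>{e\<in>E. head e = v}. \<gamma> e * x e)"

text \<open>Vectors in R^E are functions vanishing outside E.\<close>
definition Dset where
  "Dset V E tail head \<gamma> u = {x :: 'e \<Rightarrow> real. (\<forall>e. e \<notin> E \<longrightarrow> x e = 0) \<and> (\<forall>e\<in>E. x e \<ge> 0)
      \<and> (\<Sum>e\<in>{e\<in>E. tail e = u}. x e) = 1
      \<and> (\<forall>v\<in>V - {u}. netflow tail head E \<gamma> x v = 0)}"

definition fval :: "'v set \<Rightarrow> 'e set \<Rightarrow> ('e \<Rightarrow> 'v) \<Rightarrow> ('e \<Rightarrow> 'v) \<Rightarrow> ('e \<Rightarrow> real) \<Rightarrow> ('e \<Rightarrow> real) \<Rightarrow> 'v \<Rightarrow> real \<Rightarrow> ereal" where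
  "fval V E tail head c \<gamma> u \<delta> = (INF x\<in>Dset V E tail head \<gamma> u.
      ereal ((\<Sum>e\<in>E. c e * x e) + \<delta> * (\<Sum>e\<in>{e\<in>E. head e = u}. \<gamma> e * x e) - \<delta>))"

end

theory Submission
  imports Defs
begin


lemma walk_append:
  "walk ta he A v (xs @ ys) w \<longleftrightarrow> (\<exists>m. walk ta he A v xs m \<and> walk ta he A m ys w)"
  by (induction xs arbitrary: v) auto

lemma walk_mono: "walk ta he A v xs w \<Longrightarrow> A \<subseteq> B \<Longrightarrow> walk ta he B v xs w"
  by (induction xs arbitrary: v) auto

lemma walk_set: "walk ta he A v xs w \<Longrightarrow> set xs \<subseteq> A"
  by (induction xs arbitrary: v) auto

lemma walk_nodes_Cons: "walk_nodes he v (e # es) = v # walk_nodes he (he e) es"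
  by (simp add: walk_nodes_def)

lemma walk_nodes_Nil: "walk_nodes he v [] = [v]"
  by (simp add: walk_nodes_def)

lemma walk_nodes_append: "walk_nodes he v (xs @ ys) = walk_nodes he v xs @ map he ys"
  by (simp add: walk_nodes_def)

lemma walk_last: "walk ta he A v xs w \<Longrightarrow> last (walk_nodes he v xs) = w"
  by (induction xs arbitrary: v) (auto simp: walk_nodes_def)

lemma walk_map_tail: "walk ta he A v xs w \<Longrightarrow> map ta xs = butlast (walk_nodes he v xs)"
  by (induction xs arbitrary: v) (auto simp: walk_nodes_def)

lemma walk_ends_in: "walk ta he A v xs w \<Longrightarrow> v \<in> X \<Longrightarrow> (\<forall>e\<in>A. he e \<in> X) \<Longrightarrow> w \<in> X"
  by (induction xs arbitrary: v) auto

lemma path_mono: "is_path ta he A v P w \<Longrightarrow> A \<subseteq> B \<Longrightarrow> is_path ta he B v P w"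
  using walk_mono[of ta he A v P w B] by (simp add: is_path_def)

lemma cycle_mono: "is_cycle ta he A v P \<Longrightarrow> A \<subseteq> B \<Longrightarrow> is_cycle ta he B v P"
  using walk_mono[of ta he A v P v B] by (simp add: is_cycle_def)

lemma path_Nil: "is_path ta he A v [] v"
  by (simp add: is_path_def walk_nodes_def)

lemma path_split:
  assumes "is_path ta he A v P w" "x \<in> set (walk_nodes he v P)"
  shows "\<exists>P1 P2. P = P1 @ P2 \<and> is_path ta he A v P1 x \<and> is_path ta he A x P2 w"
  using assms
proof (induction P arbitrary: v)
  case Nil
  then show ?case by (auto simp: is_path_def walk_nodes_def)
next
  case (Cons e es)
  show ?case
  proof (cases "x = v")
    case True
    then show ?thesis using Cons.prems by (intro exI[of _ "[]"] exI[of _ "e # es"]) (simp add: path_Nil)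
  next
    case False
    have p: "is_path ta he A (he e) es w" and v: "v \<notin> set (walk_nodes he (he e) es)"
      and e: "e \<in> A" "ta e = v"
      using Cons.prems(1) by (auto simp: is_path_def walk_nodes_Cons)
    have "x \<in> set (walk_nodes he (he e) es)" using Cons.prems(2) False by (simp add: walk_nodes_Cons)
    from Cons.IH[OF p this] obtain Q1 Q2 where q: "es = Q1 @ Q2" "is_path ta he A (he e) Q1 x"
      "is_path ta he A x Q2 w" by blast
    have "v \<notin> set (walk_nodes he (he e) Q1)" using v q(1) by (auto simp: walk_nodes_append)
    then have "is_path ta he A v (e # Q1) x" using q(2) e by (auto simp: is_path_def walk_nodes_Cons)
    then show ?thesis using q by (intro exI[of _ "e # Q1"] exI[of _ Q2]) simp
  qed
qed

lemma path_snoc: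
  assumes "is_path ta he A v P x" "e \<in> A" "ta e = x" "he e \<notin> set (walk_nodes he v P)"
  shows "is_path ta he A v (P @ [e]) (he e)"
  using assms by (auto simp: is_path_def walk_append walk_nodes_append)

lemma path_extend:
  assumes "is_path ta he A v P x" "e \<in> A" "ta e = x"
  shows "\<exists>P'. is_path ta he A v P' (he e)"
proof (cases "he e \<in> set (walk_nodes he v P)")
  case True
  then show ?thesis using path_split[OF assms(1) True] by blast
next
  case False
  then show ?thesis using path_snoc[OF assms False] by blast
qed

lemma distinct_last_butlast: "distinct xs \<Longrightarrow> xs \<noteq> [] \<Longrightarrow> last xs \<notin> set (butlast xs)"
  by (metis append_butlast_last_id distinct_append disjoint_iff list.set_intros(1))

lemma cycle_of_path:
  assumes "e \<in> A" "ta e = t" "is_path ta he A (he e) P t"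
  shows "is_cycle ta he A t (e # P)"
proof -
  have w: "walk ta he A (he e) P t" and d: "distinct (walk_nodes he (he e) P)"
    using assms(3) by (auto simp: is_path_def)
  have l: "last (walk_nodes he (he e) P) = t" using walk_last[OF w] .
  have ne: "walk_nodes he (he e) P \<noteq> []" by (simp add: walk_nodes_def)
  have "t \<notin> set (butlast (walk_nodes he (he e) P))"
    using distinct_last_butlast[OF d ne] l by simp
  moreover have "distinct (butlast (walk_nodes he (he e) P))" using d distinct_butlast by blast
  ultimately have "distinct (butlast (walk_nodes he t (e # P)))"
    using ne by (simp add: walk_nodes_Cons)
  then show ?thesis using assms w by (simp add: is_cycle_def)
qed

lemma path_distinct: "is_path ta he A v P w \<Longrightarrow> distinct P"
  by (auto simp: is_path_def walk_nodes_def distinct_map)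

lemma cycle_distinct: "is_cycle ta he A v P \<Longrightarrow> distinct P"
  unfolding is_cycle_def using walk_map_tail[of ta he A v P v] by (metis distinct_map)

lemma distinct_len: "distinct P \<Longrightarrow> set P \<subseteq> A \<Longrightarrow> finite A \<Longrightarrow> length P \<le> card A"
  by (metis card_mono distinct_card)

lemma finite_lists_T: "finite A \<Longrightarrow> finite {P. set P \<subseteq> A \<and> length P \<le> n}"
  using finite_lists_length_le by blast

lemma wgain_append: "wgain g (xs @ ys) = wgain g xs * wgain g ys"
  by (induction xs) auto

lemma wgain_pos: "\<forall>e\<in>set xs. g e > 0 \<Longrightarrow> wgain g xs > 0"
  by (induction xs) auto

lemma wgain_div: "wgain (\<lambda>e. g e / th) xs = wgain g xs / th ^ length xs"
  by (induction xs) auto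

lemma wgain_inv: "wgain (\<lambda>e. 1 / g e) xs = 1 / wgain g xs"
  by (induction xs) auto



lemma potential:
  fixes T :: "'e set" and g :: "'e \<Rightarrow> real" and ta he :: "'e \<Rightarrow> 'v"
  assumes finT: "finite T" and gpos: "\<forall>e\<in>T. g e > 0"
    and cyc: "\<forall>w C. is_cycle ta he T w C \<longrightarrow> wgain g C < 1"
  shows "\<exists>p. (\<forall>x. p x \<ge> 1) \<and> (\<forall>e\<in>T. p (ta e) > g e * p (he e))"
proof -
  define L where "L = {P. set P \<subseteq> T \<and> length P \<le> card T}"
  have finL: "finite L" unfolding L_def using finite_lists_T[OF finT] .
  have cycL: "C \<in> L" if "is_cycle ta he T w C" for w C
  proof -
    have "set C \<subseteq> T" using that walk_set unfolding is_cycle_def by metis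
    moreover have "distinct C" using cycle_distinct[OF that] .
    ultimately show ?thesis unfolding L_def using distinct_len finT by blast
  qed
  have pathL: "P \<in> L" if "is_path ta he T x P y" for x P y
  proof -
    have "set P \<subseteq> T" using that walk_set unfolding is_path_def by metis
    moreover have "distinct P" using path_distinct[OF that] .
    ultimately show ?thesis unfolding L_def using distinct_len finT by blast
  qed
  define G where "G = wgain g ` {C\<in>L. \<exists>w. is_cycle ta he T w C}"
  define m where "m = Max (insert (1/2) G)"
  have finG: "finite G" unfolding G_def using finL by auto
  have m_ge: "wgain g C \<le> m" if "is_cycle ta he T w C" for w C
  proof -
    have "wgain g C \<in> G" unfolding G_def using that cycL by blast
    then show ?thesis unfolding m_def using finG by simp
  qed
  have m_lt: "m < 1"
  proof -
    have "\<forall>a\<in>insert (1/2) G. a < 1" unfolding G_def using cyc by auto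
    moreover have "m \<in> insert (1/2) G" unfolding m_def using finG by (intro Max_in) auto
    ultimately show ?thesis by blast
  qed
  have m_pos: "m \<ge> 1/2" unfolding m_def using finG by (intro Max_ge) auto
  define N where "N = Suc (card T)"
  define th where "th = root N (sqrt m)"
  have Npos: "0 < N" unfolding N_def by simp
  have sm_pos: "0 < sqrt m" using m_pos by simp
  have thN: "th ^ N = sqrt m" unfolding th_def using real_root_pow_pos[OF Npos sm_pos] .
  have th_pos: "0 < th" unfolding th_def using real_root_gt_zero[OF Npos sm_pos] .
  have sm1: "sqrt m < 1" using m_lt m_pos by simp
  have th_lt1: "th < 1" unfolding th_def using Npos sm1 by simp
  have sm: "m < sqrt m"
  proof -
    have "sqrt m * sqrt m < sqrt m * 1" using sm1 sm_pos by (intro mult_strict_left_mono) auto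
    then show ?thesis using m_pos by simp
  qed
  define w where "w = (\<lambda>e. g e / th)"
  have wpos: "\<forall>e\<in>T. w e > 0" unfolding w_def using gpos th_pos by auto
  have wge: "\<forall>e\<in>T. w e > g e" unfolding w_def using gpos th_pos th_lt1
    by (auto simp: less_divide_eq)
  have cyc_w: "wgain w C < 1" if "is_cycle ta he T x C" for x C
  proof -
    have "length C \<le> card T" using cycL[OF that] unfolding L_def by simp
    then have "length C \<le> N" unfolding N_def by simp
    then have "th ^ N \<le> th ^ length C" using th_pos th_lt1 by (intro power_decreasing) auto
    then have lt: "wgain g C < th ^ length C" using m_ge[OF that] sm thN by linarith
    have "0 < th ^ length C" using th_pos by simp
    then show ?thesis unfolding w_def wgain_div using lt by simp
  qed
  define Pth where "Pth x = {P\<in>L. \<exists>y. is_path ta he T x P y}" for x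
  define p where "p x = Max (wgain w ` Pth x)" for x
  have Pfin: "finite (wgain w ` Pth x)" for x unfolding Pth_def using finL by auto
  have p_ge: "wgain w P \<le> p x" if "is_path ta he T x P y" for x P y
  proof -
    have "P \<in> Pth x" unfolding Pth_def using that pathL by blast
    then show ?thesis unfolding p_def using Pfin by simp
  qed
  have p_att: "\<exists>P y. is_path ta he T x P y \<and> p x = wgain w P" for x
  proof -
    have "[] \<in> Pth x" unfolding Pth_def L_def using path_Nil by fastforce
    then have "p x \<in> wgain w ` Pth x" unfolding p_def using Pfin by (intro Max_in) auto
    then show ?thesis unfolding Pth_def by auto
  qed
  have p1: "p x \<ge> 1" for x using p_ge[OF path_Nil[of ta he T x]] by simp
  have main: "p (ta e) > g e * p (he e)" if eT: "e \<in> T" for e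
  proof -
    obtain P y where P: "is_path ta he T (he e) P y" and pe: "p (he e) = wgain w P"
      using p_att by blast
    have PT: "set P \<subseteq> T" using P walk_set unfolding is_path_def by metis
    have gl: "g e * p (he e) < w e * p (he e)" using wge eT p1[of "he e"] by simp
    have "w e * p (he e) \<le> p (ta e)"
    proof (cases "ta e \<in> set (walk_nodes he (he e) P)")
      case True
      from path_split[OF P True] obtain P1 P2 where s: "P = P1 @ P2"
        "is_path ta he T (he e) P1 (ta e)" "is_path ta he T (ta e) P2 y" by blast
      have c: "is_cycle ta he T (ta e) (e # P1)" using cycle_of_path[OF eT refl s(2)] .
      have "wgain w (e # P1) < 1" using cyc_w[OF c] .
      moreover have "0 < wgain w P2"
        using s(1) PT wpos by (intro wgain_pos) auto
      ultimately have lt: "wgain w (e # P1) * wgain w P2 < wgain w P2" by simp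
      have eq: "w e * p (he e) = wgain w (e # P1) * wgain w P2"
        using pe s(1) wgain_append[of w "e # P1" P2] by simp
      show ?thesis using eq lt p_ge[OF s(3)] by linarith
    next
      case False
      have "is_path ta he T (ta e) (e # P) y"
        using P False eT by (auto simp: is_path_def walk_nodes_Cons)
      from p_ge[OF this] show ?thesis using pe by simp
    qed
    with gl show ?thesis by simp
  qed
  show ?thesis using p1 main by blast
qed



lemma ratio_step:
  fixes x z :: "'e \<Rightarrow> real"
  assumes finE: "finite E" and xnn: "\<forall>e. x e \<ge> 0"
    and zs: "\<forall>e. z e \<noteq> 0 \<longrightarrow> e \<in> E \<and> x e \<noteq> 0" and e0: "z e0 < 0"
  shows "\<exists>t\<ge>0. (\<forall>e. x e + t * z e \<ge> 0) \<and> {e\<in>E. x e + t * z e \<noteq> 0} \<subset> {e\<in>E. x e \<noteq> 0}"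
proof -
  define M where "M = {e\<in>E. z e < 0}"
  have finM: "finite M" unfolding M_def using finE by simp
  have e0M: "e0 \<in> M" unfolding M_def using e0 zs by force
  define t where "t = Min ((\<lambda>e. x e / (- z e)) ` M)"
  have "t \<in> (\<lambda>e. x e / (- z e)) ` M" unfolding t_def using finM e0M by (intro Min_in) auto
  then obtain e1 where e1: "e1 \<in> M" "t = x e1 / (- z e1)" by blast
  have tle: "t \<le> x e / (- z e)" if "e \<in> M" for e unfolding t_def using finM that by simp
  have z1: "z e1 < 0" using e1 unfolding M_def by simp
  have t0: "t \<ge> 0" using e1(2) z1 xnn[rule_format, of e1] by (simp add: divide_nonneg_neg)
  have nn: "x e + t * z e \<ge> 0" for e
  proof (cases "z e < 0")
    case True
    then have "e \<in> M" unfolding M_def using zs by force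
    have h: "0 < - z e" using True by simp
    from tle[OF \<open>e \<in> M\<close>] have "t * (- z e) \<le> x e" by (simp only: pos_le_divide_eq[OF h])
    then show ?thesis by simp
  next
    case False
    then show ?thesis using t0 xnn[rule_format, of e] by simp
  qed
  have sub: "{e\<in>E. x e + t * z e \<noteq> 0} \<subseteq> {e\<in>E. x e \<noteq> 0}" using zs by force
  have "x e1 + t * z e1 = 0" using e1(2) z1 by (simp add: field_simps)
  moreover have "e1 \<in> {e\<in>E. x e \<noteq> 0}" using zs z1 by force
  ultimately have "{e\<in>E. x e + t * z e \<noteq> 0} \<noteq> {e\<in>E. x e \<noteq> 0}" by blast
  with sub nn t0 show ?thesis by blast
qed

fun wflow :: "('e \<Rightarrow> real) \<Rightarrow> 'e list \<Rightarrow> 'e \<Rightarrow> real" where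
  "wflow g [] = (\<lambda>_. 0)"
| "wflow g (e # es) = (\<lambda>f. (if f = e then 1 else 0) + g e * wflow g es f)"

lemma wflow_zero: "f \<notin> set W \<Longrightarrow> wflow g W f = 0"
  by (induction W) auto

lemma wflow_nonneg: "\<forall>e\<in>set W. g e > 0 \<Longrightarrow> wflow g W f \<ge> 0"
  by (induction W) auto

lemma wflow_hd: "\<forall>e'\<in>set (e # es). g e' > 0 \<Longrightarrow> wflow g (e # es) e \<ge> 1"
  using wflow_nonneg[of es g e] by simp

lemma sum_group_aux:
  fixes q :: "'v \<Rightarrow> real" and a :: "'e \<Rightarrow> real"
  assumes "finite R" "finite E"
  shows "(\<Sum>x\<in>R. q x * (\<Sum>e\<in>{e\<in>E. f e = x}. a e)) = (\<Sum>e\<in>{e\<in>E. f e \<in> R}. q (f e) * a e)"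
proof -
  have "(\<Sum>e\<in>{e\<in>E. f e \<in> R}. q (f e) * a e) =
      (\<Sum>x\<in>R. \<Sum>e\<in>{e. e \<in> {e\<in>E. f e \<in> R} \<and> f e = x}. q (f e) * a e)"
    using assms by (intro sum.group[symmetric]) auto
  also have "\<dots> = (\<Sum>x\<in>R. q x * (\<Sum>e\<in>{e\<in>E. f e = x}. a e))"
  proof (intro sum.cong refl)
    fix x assume x: "x \<in> R"
    have "{e. e \<in> {e\<in>E. f e \<in> R} \<and> f e = x} = {e\<in>E. f e = x}" using x by auto
    then have "(\<Sum>e\<in>{e. e \<in> {e\<in>E. f e \<in> R} \<and> f e = x}. q (f e) * a e)
        = (\<Sum>e\<in>{e\<in>E. f e = x}. q x * a e)" by (intro sum.cong) auto
    then show "(\<Sum>e\<in>{e. e \<in> {e\<in>E. f e \<in> R} \<and> f e = x}. q (f e) * a e)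
        = q x * (\<Sum>e\<in>{e\<in>E. f e = x}. a e)" by (simp add: sum_distrib_left)
  qed
  finally show ?thesis by simp
qed

lemma sum_nf_exchange:
  fixes q :: "'v \<Rightarrow> real"
  assumes "finite R" "finite E"
  shows "(\<Sum>x\<in>R. q x * netflow ta he E g y x) =
    (\<Sum>e\<in>{e\<in>E. ta e \<in> R}. q (ta e) * y e) - (\<Sum>e\<in>{e\<in>E. he e \<in> R}. q (he e) * (g e * y e))"
  unfolding netflow_def right_diff_distrib sum_subtractf
  using sum_group_aux[OF assms, where q=q and f=ta and a=y]
    sum_group_aux[OF assms, where q=q and f=he and a="\<lambda>e. g e * y e"]
  by simp

locale gctx =
  fixes V :: "'v set" and E :: "'e set" and ta he :: "'e \<Rightarrow> 'v"
    and c \<gamma> :: "'e \<Rightarrow> real" and u :: 'v and \<delta> :: real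
  assumes finV: "finite V" and finE: "finite E"
    and ends: "\<forall>e\<in>E. ta e \<in> V \<and> he e \<in> V"
    and gpos: "\<forall>e\<in>E. \<gamma> e > 0" and uV: "u \<in> V"
begin

abbreviation nf where "nf z v \<equiv> netflow ta he E \<gamma> z v"
definition outu :: "('e \<Rightarrow> real) \<Rightarrow> real" where "outu z = (\<Sum>e\<in>{e\<in>E. ta e = u}. z e)"
definition inu :: "('e \<Rightarrow> real) \<Rightarrow> real" where "inu z = (\<Sum>e\<in>{e\<in>E. he e = u}. \<gamma> e * z e)"
definition KK :: "('e \<Rightarrow> real) \<Rightarrow> bool" where "KK z \<longleftrightarrow> (\<forall>e. e \<notin> E \<longrightarrow> z e = 0) \<and> outu z = 0 \<and> (\<forall>v\<in>V-{u}. nf z v = 0)"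
definition gg :: "('e \<Rightarrow> real) \<Rightarrow> real" where "gg z = (\<Sum>e\<in>E. c e * z e) + \<delta> * inu z"
definition supp :: "('e \<Rightarrow> real) \<Rightarrow> 'e set" where "supp z = {e\<in>E. z e \<noteq> 0}"
abbreviation DD where "DD \<equiv> Dset V E ta he \<gamma> u"

lemma nf_lin: "nf (\<lambda>e. a * x e + b * z e) v = a * nf x v + b * nf z v"
  unfolding netflow_def by (simp add: sum.distrib sum_distrib_left algebra_simps)
lemma outu_lin: "outu (\<lambda>e. a * x e + b * z e) = a * outu x + b * outu z"
  unfolding outu_def sum.distrib sum_distrib_left by (simp add: algebra_simps)
lemma inu_lin: "inu (\<lambda>e. a * x e + b * z e) = a * inu x + b * inu z"
  unfolding inu_def by (simp add: sum.distrib sum_distrib_left algebra_simps)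
lemma gg_lin: "gg (\<lambda>e. a * x e + b * z e) = a * gg x + b * gg z"
  unfolding gg_def inu_lin by (simp add: sum.distrib sum_distrib_left algebra_simps)
lemma KK_lin: "KK x \<Longrightarrow> KK z \<Longrightarrow> KK (\<lambda>e. a * x e + b * z e)"
  unfolding KK_def using nf_lin outu_lin by simp

lemma KK_neg: "KK z \<Longrightarrow> KK (\<lambda>e. - z e)"
  using KK_lin[of z z "-1" 0] by simp
lemma gg_neg: "gg (\<lambda>e. - z e) = - gg z"
  using gg_lin[of "-1" z 0 z] by simp
lemma gg_add: "gg (\<lambda>e. x e + t * z e) = gg x + t * gg z"
  using gg_lin[of 1 x t z] by simp
lemma KK_add: "KK x \<Longrightarrow> KK z \<Longrightarrow> KK (\<lambda>e. x e + t * z e)"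
  using KK_lin[of x z 1 t] by simp

lemma nf_outu_inu: "nf z u = outu z - inu z"
  by (simp add: netflow_def outu_def inu_def)

lemma DD_iff: "x \<in> DD \<longleftrightarrow> (\<forall>e. e \<notin> E \<longrightarrow> x e = 0) \<and> (\<forall>e\<in>E. x e \<ge> 0) \<and> outu x = 1
   \<and> (\<forall>v\<in>V-{u}. nf x v = 0)"
  by (simp add: Dset_def outu_def)

lemma DD_nonneg: "x \<in> DD \<Longrightarrow> x e \<ge> 0"
  unfolding DD_iff by (cases "e \<in> E") auto

lemma DD_add: "x \<in> DD \<Longrightarrow> KK z \<Longrightarrow> (\<forall>e. x e + t * z e \<ge> 0) \<Longrightarrow> (\<lambda>e. x e + t * z e) \<in> DD"
  unfolding DD_iff KK_def using nf_lin[of 1 x t z] outu_lin[of 1 x t z] by simp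

lemma DD_diff: "x \<in> DD \<Longrightarrow> x' \<in> DD \<Longrightarrow> KK (\<lambda>e. x e - x' e)"
  unfolding DD_iff KK_def using nf_lin[of 1 x "-1" x'] outu_lin[of 1 x "-1" x'] by simp

lemma fval_eq: "fval V E ta he c \<gamma> u \<delta> = (INF x\<in>DD. ereal (gg x - \<delta>))"
  unfolding fval_def gg_def inu_def by simp

definition vertex where
  "vertex x \<longleftrightarrow> \<not> (\<exists>z. KK z \<and> (\<exists>e. z e \<noteq> 0) \<and> (\<forall>e. z e \<noteq> 0 \<longrightarrow> e \<in> E \<and> x e \<noteq> 0))"

lemma good_dir:
  assumes noray: "\<not> (\<exists>y. KK y \<and> (\<forall>e. y e \<ge> 0) \<and> gg y < 0)"
    and z: "KK z" "z e0 \<noteq> 0"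
  shows "\<exists>z'. KK z' \<and> gg z' \<le> 0 \<and> (\<exists>e. z' e < 0) \<and> (\<forall>e. z' e \<noteq> 0 \<longrightarrow> z e \<noteq> 0)"
proof (cases "(\<exists>e. z e < 0) \<and> gg z \<le> 0")
  case True
  then show ?thesis using z by blast
next
  case F1: False
  show ?thesis
  proof (cases "(\<exists>e. z e > 0) \<and> gg z \<ge> 0")
    case True
    then show ?thesis using KK_neg[OF z(1)] gg_neg[of z]
      by (intro exI[of _ "\<lambda>e. - z e"]) auto
  next
    case F2: False
    show ?thesis
    proof (cases "gg z \<le> 0")
      case True
      then have nn: "\<forall>e. z e \<ge> 0" using F1 by (simp add: not_less)
      then have "z e0 > 0" using z(2) nn[rule_format, of e0] by linarith
      then have "gg z < 0" using F2 True by auto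
      then show ?thesis using noray nn z(1) by blast
    next
      case False
      then have np: "\<forall>e. z e \<le> 0" using F2 by (auto simp: not_less)
      have "gg (\<lambda>e. - z e) < 0" using False gg_neg[of z] by simp
      then show ?thesis using noray KK_neg[OF z(1)] np by force
    qed
  qed
qed

lemma finite_supp: "finite (supp x)"
  unfolding supp_def using finE by simp

lemma reduce_vertex:
  assumes noray: "\<not> (\<exists>y. KK y \<and> (\<forall>e. y e \<ge> 0) \<and> gg y < 0)"
  shows "x \<in> DD \<Longrightarrow> \<exists>x'. x' \<in> DD \<and> vertex x' \<and> gg x' \<le> gg x"
proof (induction "card (supp x)" arbitrary: x rule: less_induct)
  case less
  show ?case
  proof (cases "vertex x")
    case True
    then show ?thesis using less.prems by blast
  next
    case False
    then obtain z e0 where z: "KK z" "z e0 \<noteq> 0" "\<forall>e. z e \<noteq> 0 \<longrightarrow> e \<in> E \<and> x e \<noteq> 0"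
      unfolding vertex_def by blast
    obtain z' e1 where z': "KK z'" "gg z' \<le> 0" "z' e1 < 0" "\<forall>e. z' e \<noteq> 0 \<longrightarrow> z e \<noteq> 0"
      using good_dir[OF noray z(1,2)] by blast
    have zs: "\<forall>e. z' e \<noteq> 0 \<longrightarrow> e \<in> E \<and> x e \<noteq> 0" using z'(4) z(3) by blast
    have xnn: "\<forall>e. x e \<ge> 0" using DD_nonneg[OF less.prems] by blast
    obtain t where t: "t \<ge> 0" "\<forall>e. x e + t * z' e \<ge> 0"
      "{e\<in>E. x e + t * z' e \<noteq> 0} \<subset> {e\<in>E. x e \<noteq> 0}"
      using ratio_step[OF finE xnn zs z'(3)] by blast
    define x' where "x' = (\<lambda>e. x e + t * z' e)"
    have x'D: "x' \<in> DD" unfolding x'_def using DD_add[OF less.prems z'(1) t(2)] .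
    have "card (supp x') < card (supp x)"
      unfolding supp_def x'_def using t(3) finE by (intro psubset_card_mono) auto
    from less.hyps[OF this x'D] obtain x'' where x'': "x'' \<in> DD" "vertex x''" "gg x'' \<le> gg x'"
      by blast
    have "gg x' \<le> gg x" unfolding x'_def gg_add using t(1) z'(2)
      by (simp add: mult_nonneg_nonpos)
    then show ?thesis using x'' by force
  qed
qed

lemma vertex_unique:
  assumes "x \<in> DD" "x' \<in> DD" "vertex x" "supp x' = supp x"
  shows "x' = x"
proof (rule ccontr)
  assume ne: "x' \<noteq> x"
  then obtain e0 where "x' e0 \<noteq> x e0" by (auto simp: fun_eq_iff)
  then have "x e0 - x' e0 \<noteq> 0" by simp
  moreover have "KK (\<lambda>e. x e - x' e)" using DD_diff[OF assms(1,2)] .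
  moreover have "\<forall>e. x e - x' e \<noteq> 0 \<longrightarrow> e \<in> E \<and> x e \<noteq> 0"
  proof (intro allI impI)
    fix e assume h: "x e - x' e \<noteq> 0"
    have E: "e \<in> E" using h assms(1,2) unfolding DD_iff by force
    have "x e \<noteq> 0 \<or> x' e \<noteq> 0" using h by auto
    then have "x e \<noteq> 0" using assms(4) E unfolding supp_def by blast
    then show "e \<in> E \<and> x e \<noteq> 0" using E by simp
  qed
  ultimately show False using assms(3) unfolding vertex_def by blast
qed

lemma vertex_finite: "finite {x\<in>DD. vertex x}"
proof (rule inj_on_finite[of supp _ "Pow E"])
  show "inj_on supp {x\<in>DD. vertex x}"
    by (intro inj_onI) (metis (mono_tags, lifting) mem_Collect_eq vertex_unique)
  show "supp ` {x\<in>DD. vertex x} \<subseteq> Pow E" unfolding supp_def by auto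
  show "finite (Pow E)" using finE by simp
qed

lemma bounded_below:
  assumes noray: "\<not> (\<exists>y. KK y \<and> (\<forall>e. y e \<ge> 0) \<and> gg y < 0)"
  shows "\<exists>B. \<forall>x\<in>DD. gg x \<ge> B"
proof -
  define B where "B = - (\<Sum>x\<in>{x\<in>DD. vertex x}. \<bar>gg x\<bar>)"
  have "gg x \<ge> B" if xD: "x \<in> DD" for x
  proof -
    obtain x' where x': "x' \<in> DD" "vertex x'" "gg x' \<le> gg x"
      using reduce_vertex[OF noray xD] by blast
    have "\<bar>gg x'\<bar> \<le> (\<Sum>x\<in>{x\<in>DD. vertex x}. \<bar>gg x\<bar>)"
      using x' vertex_finite by (intro member_le_sum) auto
    then show ?thesis unfolding B_def using x'(3) by linarith
  qed
  then show ?thesis by blast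
qed

end



context gctx
begin

definition cc :: "('e \<Rightarrow> real) \<Rightarrow> real" where "cc z = (\<Sum>f\<in>E. c f * z f)"

lemma gg_cc: "gg z = cc z + \<delta> * inu z" unfolding gg_def cc_def by simp

lemma nf3: "nf (\<lambda>f. x f + a * y f + b * z f) v = nf x v + a * nf y v + b * nf z v"
  unfolding netflow_def by (simp add: sum.distrib sum_distrib_left algebra_simps)
lemma cc3: "cc (\<lambda>f. x f + a * y f + b * z f) = cc x + a * cc y + b * cc z"
  unfolding cc_def by (simp add: sum.distrib sum_distrib_left algebra_simps)

lemma nf_ind:
  assumes "e \<in> E"
  shows "nf (\<lambda>f. if f = e then 1 else 0) x = (if ta e = x then 1 else 0) - \<gamma> e * (if he e = x then 1 else 0)"
proof -
  have 1: "(\<Sum>f\<in>{f\<in>E. ta f = x}. (if f = e then 1 else 0::real)) = (if ta e = x then 1 else 0)"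
    using finE assms by (simp add: sum.delta)
  have "(\<Sum>f\<in>{f\<in>E. he f = x}. \<gamma> f * (if f = e then 1 else 0::real))
      = (\<Sum>f\<in>{f\<in>E. he f = x}. (if f = e then \<gamma> f else 0))"
    by (intro sum.cong) auto
  also have "\<dots> = (if he e = x then \<gamma> e else 0)"
    using finE assms by (simp add: sum.delta)
  finally show ?thesis unfolding netflow_def using 1 by simp
qed

lemma cc_ind: "e \<in> E \<Longrightarrow> cc (\<lambda>f. if f = e then 1 else 0) = c e"
proof -
  assume e: "e \<in> E"
  have "(\<Sum>f\<in>E. c f * (if f = e then 1 else 0)) = (\<Sum>f\<in>E. (if f = e then c f else 0))"
    by (intro sum.cong) auto
  then show ?thesis unfolding cc_def using finE e by (simp add: sum.delta)
qed

lemma nf_wflow: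
  "walk ta he E a W b \<Longrightarrow>
     nf (wflow \<gamma> W) x = (if x = a then 1 else 0) - wgain \<gamma> W * (if x = b then 1 else 0)"
proof (induction W arbitrary: a)
  case Nil
  then show ?case by (simp add: netflow_def)
next
  case (Cons e es)
  have w: "wflow \<gamma> (e # es) = (\<lambda>f. 1 * (if f = e then 1 else 0) + \<gamma> e * wflow \<gamma> es f)"
    by auto
  have e: "e \<in> E" "ta e = a" and es: "walk ta he E (he e) es b" using Cons.prems by auto
  show ?case
    unfolding w nf_lin nf_ind[OF e(1)] Cons.IH[OF es] using e by (auto simp: algebra_simps)
qed

lemma cc_wflow: "set W \<subseteq> E \<Longrightarrow> cc (wflow \<gamma> W) = wcost c \<gamma> W"
proof (induction W)
  case Nil
  then show ?case by (simp add: cc_def)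
next
  case (Cons e es)
  have w: "wflow \<gamma> (e # es) = (\<lambda>f. (if f = e then 1 else 0) + \<gamma> e * wflow \<gamma> es f)"
    by auto
  have "cc (wflow \<gamma> (e # es)) = cc (\<lambda>f. if f = e then 1 else 0) + \<gamma> e * cc (wflow \<gamma> es)"
    unfolding w cc_def by (simp add: sum.distrib sum_distrib_left algebra_simps)
  then show ?case using Cons cc_ind by simp
qed

lemma struct_flow:
  assumes SA: "S \<subseteq> {e\<in>E. ta e \<noteq> u}"
    and C: "walk ta he S v C v" "C \<noteq> []"
    and P: "walk ta he S v P w" and D: "walk ta he S w D w"
    and ab: "a \<ge> 0" "b \<ge> 0"
    and bal1: "1 - wgain \<gamma> C + a = 0"
    and bal2: "w = u \<or> b * (1 - wgain \<gamma> D) = a * wgain \<gamma> P"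
    and wu: "w = u \<Longrightarrow> b = 0"
  defines "z \<equiv> \<lambda>f. wflow \<gamma> C f + a * wflow \<gamma> P f + b * wflow \<gamma> D f"
  shows "KK z" "\<forall>f. z f \<ge> 0" "\<exists>f. z f > 0" "\<forall>f. z f \<noteq> 0 \<longrightarrow> f \<in> S"
    "gg z = wcost c \<gamma> C + a * wcost c \<gamma> P + b * wcost c \<gamma> D
            + (if w = u then \<delta> * a * wgain \<gamma> P else 0)"
proof -
  have SE: "S \<subseteq> E" using SA by auto
  have setC: "set C \<subseteq> S" and setP: "set P \<subseteq> S" and setD: "set D \<subseteq> S"
    using C P D walk_set by metis+
  have CE: "walk ta he E v C v" and PE: "walk ta he E v P w" and DE: "walk ta he E w D w"
    using C P D SE walk_mono by metis+
  have gS: "\<forall>e\<in>S. \<gamma> e > 0" using gpos SE by auto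
  have nn: "\<forall>f. wflow \<gamma> W f \<ge> 0" if "set W \<subseteq> S" for W
    using wflow_nonneg gS that by (metis subsetD)
  show z0: "\<forall>f. z f \<ge> 0" unfolding z_def using nn[OF setC] nn[OF setP] nn[OF setD] ab by simp
  show zS: "\<forall>f. z f \<noteq> 0 \<longrightarrow> f \<in> S"
  proof (intro allI impI)
    fix f assume h: "z f \<noteq> 0"
    show "f \<in> S"
    proof (rule ccontr)
      assume "f \<notin> S"
      then have "f \<notin> set C" "f \<notin> set P" "f \<notin> set D" using setC setP setD by auto
      then have "z f = 0" unfolding z_def by (simp add: wflow_zero)
      then show False using h by simp
    qed
  qed
  obtain e es where Ce: "C = e # es" using C(2) by (cases C) auto
  have "wflow \<gamma> C e \<ge> 1" unfolding Ce using wflow_hd[of e es \<gamma>] gS setC Ce by auto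
  then have "z e > 0" unfolding z_def using nn[OF setP] nn[OF setD] ab
    by (smt (verit) mult_nonneg_nonneg)
  then show "\<exists>f. z f > 0" by blast
  have vu: "v \<noteq> u" using C Ce SA by auto
  have nfz: "nf z x = (if x = v then 1 - wgain \<gamma> C + a else 0)
      + (if x = w then b * (1 - wgain \<gamma> D) - a * wgain \<gamma> P else 0)" for x
    unfolding z_def nf3 nf_wflow[OF CE] nf_wflow[OF PE] nf_wflow[OF DE]
    by (auto simp: algebra_simps)
  have outz: "outu z = 0"
  proof -
    have "z f = 0" if "f \<in> {e\<in>E. ta e = u}" for f using zS SA that by blast
    then show ?thesis unfolding outu_def by simp
  qed
  show "KK z"
    unfolding KK_def
  proof (intro conjI ballI allI impI outz)
    fix f assume "f \<notin> E" then show "z f = 0" using zS SE by blast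
  next
    fix x assume x: "x \<in> V - {u}"
    show "nf z x = 0" unfolding nfz using bal1 bal2 x by auto
  qed
  have inz: "inu z = (if w = u then a * wgain \<gamma> P else 0)"
    using nf_outu_inu[of z] outz nfz[of u] vu wu by auto
  have "cc z = wcost c \<gamma> C + a * wcost c \<gamma> P + b * wcost c \<gamma> D"
    unfolding z_def cc3 using cc_wflow setC setP setD SE by (metis order_trans)
  then show "gg z = wcost c \<gamma> C + a * wcost c \<gamma> P + b * wcost c \<gamma> D
            + (if w = u then \<delta> * a * wgain \<gamma> P else 0)"
    unfolding gg_cc inz by simp
qed

end



context gctx
begin

lemma min_ray:
  assumes "KK y0" "\<forall>e. y0 e \<ge> 0" "gg y0 < 0"
  shows "\<exists>y. KK y \<and> (\<forall>e. y e \<ge> 0) \<and> gg y < 0 \<and>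
     (\<forall>z. KK z \<and> (\<forall>e. z e \<ge> 0) \<and> (\<exists>e. z e > 0) \<and> (\<forall>e. z e \<noteq> 0 \<longrightarrow> y e \<noteq> 0) \<longrightarrow> gg z < 0)"
proof -
  let ?P = "\<lambda>y. KK y \<and> (\<forall>e. y e \<ge> 0) \<and> gg y < 0"
  obtain y where y: "?P y" and ymin: "\<forall>y'. ?P y' \<longrightarrow> card (supp y) \<le> card (supp y')"
    using ex_has_least_nat[of ?P y0 "\<lambda>y. card (supp y)"] assms by blast
  have MC: "\<forall>e. z e = 0" if z: "KK z" "gg z = 0" "\<forall>e. z e \<noteq> 0 \<longrightarrow> y e \<noteq> 0" for z
  proof (rule ccontr)
    assume "\<not> (\<forall>e. z e = 0)"
    then obtain e1 where e1: "z e1 \<noteq> 0" by blast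
    obtain z' e2 where z': "KK z'" "gg z' = 0" "z' e2 < 0" "\<forall>e. z' e \<noteq> 0 \<longrightarrow> z e \<noteq> 0"
    proof (cases "z e1 < 0")
      case True
      then show ?thesis using that z by blast
    next
      case False
      then have "- z e1 < 0" using e1 by simp
      then show ?thesis using that[of "\<lambda>e. - z e" e1] KK_neg[OF z(1)] gg_neg[of z] z(2) by auto
    qed
    have zs: "\<forall>e. z' e \<noteq> 0 \<longrightarrow> e \<in> E \<and> y e \<noteq> 0"
      using z'(4) z(1,3) unfolding KK_def by blast
    have ynn: "\<forall>e. y e \<ge> 0" using y by blast
    obtain t where t: "t \<ge> 0" "\<forall>e. y e + t * z' e \<ge> 0"
      "{e\<in>E. y e + t * z' e \<noteq> 0} \<subset> {e\<in>E. y e \<noteq> 0}"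
      using ratio_step[OF finE ynn zs z'(3)] by blast
    define y' where "y' = (\<lambda>e. y e + t * z' e)"
    have "?P y'" unfolding y'_def using KK_add[of y z' t] y z' t gg_add[of y t z'] by simp
    moreover have "card (supp y') < card (supp y)"
      unfolding supp_def y'_def using t(3) finE by (intro psubset_card_mono) auto
    ultimately show False using ymin by force
  qed
  have "gg z < 0" if z: "KK z" "\<forall>e. z e \<ge> 0" "z e0 > 0" "\<forall>e. z e \<noteq> 0 \<longrightarrow> y e \<noteq> 0" for z e0
  proof (rule ccontr)
    assume "\<not> gg z < 0"
    then have gz: "gg z \<ge> 0" by simp
    define w where "w = (\<lambda>e. gg z * y e + (- gg y) * z e)"
    have "KK w" unfolding w_def using KK_lin y z(1) by blast
    moreover have "gg w = 0" unfolding w_def gg_lin by simp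
    moreover have "\<forall>e. w e \<noteq> 0 \<longrightarrow> y e \<noteq> 0" unfolding w_def using z(4) by auto
    ultimately have "w e0 = 0" using MC by blast
    moreover have "gg z * y e0 \<ge> 0" using gz y by simp
    moreover have "(- gg y) * z e0 > 0" using y z(3) by (intro mult_pos_pos) auto
    ultimately show False unfolding w_def by linarith
  qed
  then show ?thesis using y by blast
qed

lemma find_struct:
  assumes y: "KK y" "\<forall>e. y e \<ge> 0" "y e0 \<noteq> 0"
  defines "S \<equiv> {e\<in>E. y e > 0}"
  shows "(\<exists>v C. is_cycle ta he S v C \<and> wgain \<gamma> C = 1)
       \<or> (\<exists>v w C P D. is_cycle ta he S v C \<and> wgain \<gamma> C > 1 \<and> is_cycle ta he S w D \<and> wgain \<gamma> D < 1
            \<and> is_path ta he S v P w)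
       \<or> (\<exists>v C P. is_cycle ta he S v C \<and> wgain \<gamma> C > 1 \<and> is_path ta he S v P u)"
proof -
  have SE: "S \<subseteq> E" unfolding S_def by auto
  have finS: "finite S" using SE finE finite_subset by blast
  have outy: "outu y = 0" using y(1) unfolding KK_def by simp
  have SA: "S \<subseteq> {e\<in>E. ta e \<noteq> u}"
  proof
    fix e assume e: "e \<in> S"
    have "\<forall>f\<in>{e\<in>E. ta e = u}. y f = 0"
      using outy finE y(2) unfolding outu_def by (subst sum_nonneg_eq_0_iff[symmetric]) auto
    then show "e \<in> {e\<in>E. ta e \<noteq> u}" using e unfolding S_def by auto
  qed
  have e0S: "e0 \<in> S"
    using y unfolding S_def KK_def by (metis (mono_tags, lifting) mem_Collect_eq order_le_less)
  have gS: "\<forall>e\<in>S. \<gamma> e > 0" using gpos SE by auto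
  have ysupp: "y e = 0" if "e \<notin> S" for e
    using that y(2)[rule_format, of e] y(1) unfolding S_def KK_def by force
  have "\<exists>v C. is_cycle ta he S v C \<and> wgain \<gamma> C \<ge> 1"
  proof (rule ccontr)
    assume "\<not> ?thesis"
    then have "\<forall>w C. is_cycle ta he S w C \<longrightarrow> wgain \<gamma> C < 1" by (auto simp: not_le)
    from potential[OF finS gS this] obtain p where p: "\<forall>x. p x \<ge> 1"
      "\<forall>e\<in>S. p (ta e) > \<gamma> e * p (he e)" by blast
    have EV1: "{e\<in>E. ta e \<in> V} = E" and EV2: "{e\<in>E. he e \<in> V} = E" using ends by auto
    have ex: "(\<Sum>x\<in>V. p x * nf y x) = (\<Sum>e\<in>E. y e * (p (ta e) - \<gamma> e * p (he e)))"
      unfolding sum_nf_exchange[OF finV finE] EV1 EV2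
      by (simp add: sum_subtractf[symmetric] algebra_simps)
    have "(\<Sum>x\<in>V. p x * nf y x) = p u * nf y u + (\<Sum>x\<in>V-{u}. p x * nf y x)"
      using finV uV by (simp add: sum.remove)
    also have "(\<Sum>x\<in>V-{u}. p x * nf y x) = 0" using y(1) unfolding KK_def by simp
    also have "nf y u = - inu y" using nf_outu_inu[of y] outy by simp
    finally have l: "(\<Sum>x\<in>V. p x * nf y x) = - (p u * inu y)" by simp
    have "inu y \<ge> 0" unfolding inu_def using gpos y(2) by (intro sum_nonneg) auto
    then have "(\<Sum>x\<in>V. p x * nf y x) \<le> 0" unfolding l using p(1)[rule_format, of u] by simp
    moreover have "(\<Sum>e\<in>E. y e * (p (ta e) - \<gamma> e * p (he e))) > 0"
    proof (rule sum_pos2[OF finE])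
      show "e0 \<in> E" using e0S SE by auto
      show "0 < y e0 * (p (ta e0) - \<gamma> e0 * p (he e0))" using e0S p(2) unfolding S_def by simp
      fix e assume "e \<in> E"
      show "0 \<le> y e * (p (ta e) - \<gamma> e * p (he e))"
      proof (cases "e \<in> S")
        case True
        then have "p (ta e) - \<gamma> e * p (he e) > 0" using p(2) by auto
        then show ?thesis using y(2) by simp
      next
        case False then show ?thesis using ysupp by simp
      qed
    qed
    ultimately show False using ex by simp
  qed
  then obtain v C where C: "is_cycle ta he S v C" "wgain \<gamma> C \<ge> 1" by blast
  have CS: "walk ta he S v C v" "C \<noteq> []" using C(1) unfolding is_cycle_def by auto
  obtain e1 es1 where Ce: "C = e1 # es1" using CS(2) by (cases C) auto
  have e1: "e1 \<in> S" "ta e1 = v" using CS(1) Ce by auto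
  have vV: "v \<in> V" using e1 SE ends by auto
  show ?thesis
  proof (cases "wgain \<gamma> C = 1")
    case True
    then show ?thesis using C by blast
  next
    case False
    then have Cg: "wgain \<gamma> C > 1" using C(2) by simp
    define R where "R = {x. \<exists>P. is_path ta he S v P x}"
    show ?thesis
    proof (cases "u \<in> R")
      case True
      then show ?thesis using C Cg unfolding R_def by blast
    next
      case uR: False
      define T where "T = {e\<in>S. ta e \<in> R}"
      have vR: "v \<in> R" unfolding R_def using path_Nil by fast
      have Rclos: "he e \<in> R" if "e \<in> S" "ta e \<in> R" for e
        using that path_extend unfolding R_def by fast
      have RV: "R \<subseteq> V"
      proof
        fix x assume "x \<in> R"
        then obtain P where "is_path ta he S v P x" unfolding R_def by blast
        then have "walk ta he S v P x" unfolding is_path_def by simp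
        then show "x \<in> V" using walk_ends_in[of ta he S v P x V] vV SE ends by auto
      qed
      have finR: "finite R" using RV finV finite_subset by blast
      show ?thesis
      proof (cases "\<exists>w D. is_cycle ta he T w D \<and> wgain \<gamma> D \<le> 1")
        case True
        then obtain w D where D: "is_cycle ta he T w D" "wgain \<gamma> D \<le> 1" by blast
        have DT: "walk ta he T w D w" "D \<noteq> []" using D(1) unfolding is_cycle_def by auto
        obtain f fs where De: "D = f # fs" using DT(2) by (cases D) auto
        have "f \<in> T" "ta f = w" using DT(1) De by auto
        then have "w \<in> R" unfolding T_def by auto
        then obtain P where P: "is_path ta he S v P w" unfolding R_def by blast
        have TS: "T \<subseteq> S" unfolding T_def by auto
        have DS: "is_cycle ta he S w D" using cycle_mono[OF D(1) TS] .
        show ?thesis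
        proof (cases "wgain \<gamma> D = 1")
          case True then show ?thesis using DS by blast
        next
          case False then have "wgain \<gamma> D < 1" using D(2) by simp
          then show ?thesis using DS C(1) Cg P by blast
        qed
      next
        case False
        have finT: "finite T" using finS unfolding T_def by simp
        have gT: "\<forall>e\<in>T. 1 / \<gamma> e > 0" using gS unfolding T_def by auto
        have "\<forall>w D. is_cycle ta he T w D \<longrightarrow> wgain (\<lambda>e. 1 / \<gamma> e) D < 1"
        proof (intro allI impI)
          fix w D assume "is_cycle ta he T w D"
          then have "wgain \<gamma> D > 1" using False by (auto simp: not_le)
          then show "wgain (\<lambda>e. 1 / \<gamma> e) D < 1" unfolding wgain_inv by simp
        qed
        from potential[OF finT gT this] obtain p where p: "\<forall>x. p x \<ge> 1"
          "\<forall>e\<in>T. p (ta e) > 1 / \<gamma> e * p (he e)" by blast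
        define q where "q x = 1 / p x" for x
        have qpos: "q x > 0" for x unfolding q_def using p(1)[rule_format, of x] by simp
        have qT: "q (ta e) < \<gamma> e * q (he e)" if "e \<in> T" for e
        proof -
          have g: "\<gamma> e > 0" using gS that unfolding T_def by auto
          have "p (ta e) > p (he e) / \<gamma> e" using p(2) that by simp
          then have "p (ta e) * \<gamma> e > p (he e)" using g by (simp add: divide_less_eq)
          moreover have "p (ta e) > 0" "p (he e) > 0" using p(1)[rule_format, of "ta e"] p(1)[rule_format, of "he e"] by linarith+
          ultimately show ?thesis unfolding q_def using g
            by (simp add: field_simps)
        qed
        have "(\<Sum>x\<in>R. q x * nf y x) = 0"
          using y(1) RV uR unfolding KK_def by (intro sum.neutral) auto
        then have eq0: "(\<Sum>e\<in>{e\<in>E. ta e \<in> R}. q (ta e) * y e)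
            - (\<Sum>e\<in>{e\<in>E. he e \<in> R}. q (he e) * (\<gamma> e * y e)) = 0"
          unfolding sum_nf_exchange[OF finR finE] .
        have X3: "(\<Sum>e\<in>{e\<in>E. ta e \<in> R}. q (he e) * (\<gamma> e * y e))
            \<le> (\<Sum>e\<in>{e\<in>E. he e \<in> R}. q (he e) * (\<gamma> e * y e))"
        proof -
          have "(\<Sum>e\<in>{e\<in>E. ta e \<in> R}. q (he e) * (\<gamma> e * y e))
              = (\<Sum>e\<in>{e\<in>E. ta e \<in> R \<and> he e \<in> R}. q (he e) * (\<gamma> e * y e))"
          proof (rule sum.mono_neutral_right)
            show "finite {e\<in>E. ta e \<in> R}" using finE by simp
            show "{e\<in>E. ta e \<in> R \<and> he e \<in> R} \<subseteq> {e\<in>E. ta e \<in> R}" by auto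
            show "\<forall>i\<in>{e\<in>E. ta e \<in> R} - {e\<in>E. ta e \<in> R \<and> he e \<in> R}. q (he i) * (\<gamma> i * y i) = 0"
            proof
              fix i assume i: "i \<in> {e\<in>E. ta e \<in> R} - {e\<in>E. ta e \<in> R \<and> he e \<in> R}"
              then have "i \<notin> S" using Rclos by auto
              then show "q (he i) * (\<gamma> i * y i) = 0" using ysupp by simp
            qed
          qed
          also have "\<dots> \<le> (\<Sum>e\<in>{e\<in>E. he e \<in> R}. q (he e) * (\<gamma> e * y e))"
          proof (rule sum_mono2)
            show "finite {e\<in>E. he e \<in> R}" using finE by simp
            show "{e\<in>E. ta e \<in> R \<and> he e \<in> R} \<subseteq> {e\<in>E. he e \<in> R}" by auto
            fix b assume b: "b \<in> {e\<in>E. he e \<in> R} - {e\<in>E. ta e \<in> R \<and> he e \<in> R}"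
            then have g: "\<gamma> b > 0" using gpos by auto
            have "0 \<le> \<gamma> b * y b" using g y(2)[rule_format, of b] by simp
            then show "0 \<le> q (he b) * (\<gamma> b * y b)" using qpos[of "he b"] by simp
          qed
          finally show ?thesis .
        qed
        have "(\<Sum>e\<in>{e\<in>E. ta e \<in> R}. y e * (\<gamma> e * q (he e) - q (ta e))) > 0"
        proof (rule sum_pos2)
          show "finite {e\<in>E. ta e \<in> R}" using finE by simp
          show "e1 \<in> {e\<in>E. ta e \<in> R}" using e1 vR SE by auto
          have "e1 \<in> T" using e1 vR unfolding T_def by auto
          then have "\<gamma> e1 * q (he e1) - q (ta e1) > 0" using qT by simp
          moreover have "y e1 > 0" using e1 unfolding S_def by simp
          ultimately show "0 < y e1 * (\<gamma> e1 * q (he e1) - q (ta e1))" by simp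
          fix e assume e: "e \<in> {e\<in>E. ta e \<in> R}"
          show "0 \<le> y e * (\<gamma> e * q (he e) - q (ta e))"
          proof (cases "e \<in> S")
            case True
            then have "e \<in> T" using e unfolding T_def by auto
            then have "\<gamma> e * q (he e) - q (ta e) > 0" using qT by simp
            then show ?thesis using y(2)[rule_format, of e] by simp
          next
            case False then show ?thesis using ysupp by simp
          qed
        qed
        then have "(\<Sum>e\<in>{e\<in>E. ta e \<in> R}. q (ta e) * y e)
            < (\<Sum>e\<in>{e\<in>E. ta e \<in> R}. q (he e) * (\<gamma> e * y e))"
          by (simp add: sum_subtractf algebra_simps)
        with eq0 X3 show ?thesis by linarith
      qed
    qed
  qed
qed

end



context gctx
begin

abbreviation AA where "AA \<equiv> {e\<in>E. ta e \<noteq> u}"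

lemma gain_pos_walk: "walk ta he S a W b \<Longrightarrow> S \<subseteq> E \<Longrightarrow> wgain \<gamma> W > 0"
  using walk_set[of ta he S a W b] gpos by (intro wgain_pos) auto

lemma cyc_not_u: "is_cycle ta he S v C \<Longrightarrow> S \<subseteq> AA \<Longrightarrow> v \<noteq> u"
  unfolding is_cycle_def by (cases C) auto

lemma unit_z:
  assumes SA: "S \<subseteq> AA" and C: "is_cycle ta he S v C" "wgain \<gamma> C = 1"
  shows "\<exists>z. KK z \<and> (\<forall>f. z f \<ge> 0) \<and> (\<exists>f. z f > 0) \<and> (\<forall>f. z f \<noteq> 0 \<longrightarrow> f \<in> S)
     \<and> (gg z < 0 \<longleftrightarrow> wcost c \<gamma> C < 0)"
proof -
  have W: "walk ta he S v C v" "C \<noteq> []" using C(1) unfolding is_cycle_def by auto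
  have P: "walk ta he S v [] v" by simp
  note sf = struct_flow[where S=S and v=v and C=C and P="[]" and w=v and D="[]" and a=0 and b=0,
      OF SA W P P]
  have vu: "v \<noteq> u" using cyc_not_u[OF C(1) SA] .
  show ?thesis using sf C(2) vu by auto
qed

lemma du_z:
  assumes SA: "S \<subseteq> AA" and C: "is_cycle ta he S v C" "wgain \<gamma> C > 1"
    and P: "is_path ta he S v P u"
  shows "\<exists>z. KK z \<and> (\<forall>f. z f \<ge> 0) \<and> (\<exists>f. z f > 0) \<and> (\<forall>f. z f \<noteq> 0 \<longrightarrow> f \<in> S)
     \<and> (gg z < 0 \<longleftrightarrow> wcost c \<gamma> C + (wgain \<gamma> C - 1) * (wcost c \<gamma> P + wgain \<gamma> P * \<delta>) < 0)"
proof -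
  have W: "walk ta he S v C v" "C \<noteq> []" using C(1) unfolding is_cycle_def by auto
  have PW: "walk ta he S v P u" using P unfolding is_path_def by auto
  have D: "walk ta he S u [] u" by simp
  define a where "a = wgain \<gamma> C - 1"
  have a0: "a \<ge> 0" unfolding a_def using C(2) by simp
  note sf = struct_flow[where S=S and v=v and C=C and P=P and w=u and D="[]" and a=a and b=0,
      OF SA W PW D a0]
  define Z where "Z = (\<lambda>f. wflow \<gamma> C f + a * wflow \<gamma> P f + 0 * wflow \<gamma> [] f)"
  have e: "wcost c \<gamma> C + a * wcost c \<gamma> P + 0 * wcost c \<gamma> [] + (if u = u then \<delta> * a * wgain \<gamma> P else 0)
     = wcost c \<gamma> C + (wgain \<gamma> C - 1) * (wcost c \<gamma> P + wgain \<gamma> P * \<delta>)"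
    unfolding a_def by (simp add: algebra_simps)
  have "KK Z \<and> (\<forall>f. Z f \<ge> 0) \<and> (\<exists>f. Z f > 0) \<and> (\<forall>f. Z f \<noteq> 0 \<longrightarrow> f \<in> S)
     \<and> (gg Z < 0 \<longleftrightarrow> wcost c \<gamma> C + (wgain \<gamma> C - 1) * (wcost c \<gamma> P + wgain \<gamma> P * \<delta>) < 0)"
  proof -
    have bal1: "1 - wgain \<gamma> C + a = 0" unfolding a_def by simp
    have bal2: "u = u \<or> 0 * (1 - wgain \<gamma> []) = a * wgain \<gamma> P" by simp
    have wu: "u = u \<Longrightarrow> (0::real) = 0" by simp
    show ?thesis unfolding Z_def using sf[OF order_refl bal1 bal2 wu] e by (simp, linarith)
  qed
  then show ?thesis by blast
qed

lemma bic_z: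
  assumes SA: "S \<subseteq> AA" and C: "is_cycle ta he S v C" "wgain \<gamma> C > 1"
    and D: "is_cycle ta he S w D" "wgain \<gamma> D < 1"
    and P: "is_path ta he S v P w"
  shows "\<exists>z. KK z \<and> (\<forall>f. z f \<ge> 0) \<and> (\<exists>f. z f > 0) \<and> (\<forall>f. z f \<noteq> 0 \<longrightarrow> f \<in> S)
     \<and> (gg z < 0 \<longleftrightarrow> wcost c \<gamma> P + wgain \<gamma> P * (wcost c \<gamma> D / (1 - wgain \<gamma> D))
            < - wcost c \<gamma> C / (wgain \<gamma> C - 1))"
proof -
  have W: "walk ta he S v C v" "C \<noteq> []" using C(1) unfolding is_cycle_def by auto
  have DW: "walk ta he S w D w" using D(1) unfolding is_cycle_def by auto
  have PW: "walk ta he S v P w" using P unfolding is_path_def by auto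
  have SE: "S \<subseteq> E" using SA by auto
  have gP: "wgain \<gamma> P > 0" using gain_pos_walk[OF PW SE] .
  have wu: "w \<noteq> u" using cyc_not_u[OF D(1) SA] .
  define a where "a = wgain \<gamma> C - 1"
  define b where "b = a * wgain \<gamma> P / (1 - wgain \<gamma> D)"
  have a0: "a > 0" unfolding a_def using C(2) by simp
  have dpos: "1 - wgain \<gamma> D > 0" using D(2) by simp
  have b0: "b \<ge> 0" unfolding b_def using a0 gP dpos by simp
  have bal2: "w = u \<or> b * (1 - wgain \<gamma> D) = a * wgain \<gamma> P" unfolding b_def using dpos by simp
  note sf = struct_flow[where S=S and v=v and C=C and P=P and w=w and D=D and a=a and b=b,
      OF SA W PW DW less_imp_le[OF a0] b0 _ bal2]
  have bal1: "1 - wgain \<gamma> C + a = 0" unfolding a_def by simp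
  let ?X = "wcost c \<gamma> P + wgain \<gamma> P * (wcost c \<gamma> D / (1 - wgain \<gamma> D))"
  have key: "wcost c \<gamma> C + a * wcost c \<gamma> P + b * wcost c \<gamma> D = wcost c \<gamma> C + a * ?X"
    unfolding b_def using dpos by (simp add: field_simps)
  have e1: "?X < - wcost c \<gamma> C / a \<longleftrightarrow> ?X * a < - wcost c \<gamma> C" by (rule pos_less_divide_eq[OF a0])
  have m: "a * ?X = ?X * a" by (rule mult.commute)
  have e2: "wcost c \<gamma> C + a * ?X < 0 \<longleftrightarrow> ?X * a < - wcost c \<gamma> C" using m by linarith
  have iff: "wcost c \<gamma> C + a * ?X < 0 \<longleftrightarrow> ?X < - wcost c \<gamma> C / (wgain \<gamma> C - 1)"
    unfolding a_def[symmetric] using e1 e2 by blast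
  show ?thesis using sf(1-4)[OF bal1] sf(5)[OF bal1] wu key iff by auto
qed

lemma S_sub_A:
  assumes "KK y" "\<forall>e. y e \<ge> 0"
  shows "{e\<in>E. y e > 0} \<subseteq> AA"
proof
  fix e assume e: "e \<in> {e\<in>E. y e > 0}"
  have "outu y = 0" using assms(1) unfolding KK_def by simp
  then have "\<forall>f\<in>{e\<in>E. ta e = u}. y f = 0"
    using finE assms(2) unfolding outu_def by (subst sum_nonneg_eq_0_iff[symmetric]) auto
  then show "e \<in> AA" using e by auto
qed

lemma main_iff:
  "fval V E ta he c \<gamma> u \<delta> = -\<infinity> \<longleftrightarrow> (DD \<noteq> {} \<and>
     (has_neg_unit_gain_cycle ta he AA c \<gamma> \<or> has_neg_bicycle ta he AA c \<gamma>
      \<or> has_du_neg_fg_cycle ta he AA c \<gamma> \<delta> u))"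
proof
  assume f: "fval V E ta he c \<gamma> u \<delta> = -\<infinity>"
  have DDne: "DD \<noteq> {}"
  proof
    assume "DD = {}"
    then have "fval V E ta he c \<gamma> u \<delta> = \<infinity>" unfolding fval_eq by (simp add: top_ereal_def)
    then show False using f by simp
  qed
  have "\<exists>y. KK y \<and> (\<forall>e. y e \<ge> 0) \<and> gg y < 0"
  proof (rule ccontr)
    assume noray: "\<not> ?thesis"
    obtain B where B: "\<forall>x\<in>DD. gg x \<ge> B" using bounded_below[OF noray] by blast
    have "(INF x\<in>DD. ereal (gg x - \<delta>)) \<noteq> -\<infinity>"
      unfolding INF_eq_minf using B by (intro exI[of _ "ereal (B - \<delta>)"]) auto
    with f show False unfolding fval_eq by simp
  qed
  then obtain y0 where "KK y0" "\<forall>e. y0 e \<ge> 0" "gg y0 < 0" by blast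
  from min_ray[OF this] obtain y where y: "KK y" "\<forall>e. y e \<ge> 0" "gg y < 0"
    and ymin: "\<And>z. KK z \<Longrightarrow> \<forall>e. z e \<ge> 0 \<Longrightarrow> \<exists>e. z e > 0 \<Longrightarrow> \<forall>e. z e \<noteq> 0 \<longrightarrow> y e \<noteq> 0
       \<Longrightarrow> gg z < 0" by blast
  have "\<exists>e. y e \<noteq> 0"
  proof (rule ccontr)
    assume "\<not> ?thesis"
    then have "gg y = 0" unfolding gg_def inu_def by simp
    then show False using y(3) by simp
  qed
  then obtain e0 where e0: "y e0 \<noteq> 0" by blast
  define S where "S = {e\<in>E. y e > 0}"
  have SA: "S \<subseteq> AA" unfolding S_def using S_sub_A[OF y(1,2)] .
  have Sy: "\<forall>f. f \<in> S \<longrightarrow> y f \<noteq> 0" unfolding S_def by auto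
  have gz: "gg z < 0" if "KK z \<and> (\<forall>f. z f \<ge> 0) \<and> (\<exists>f. z f > 0) \<and> (\<forall>f. z f \<noteq> 0 \<longrightarrow> f \<in> S)" for z
    using ymin that Sy by blast
  have "has_neg_unit_gain_cycle ta he AA c \<gamma> \<or> has_neg_bicycle ta he AA c \<gamma>
      \<or> has_du_neg_fg_cycle ta he AA c \<gamma> \<delta> u"
    using find_struct[OF y(1,2) e0, folded S_def]
  proof (elim disjE exE conjE)
    fix v C assume C: "is_cycle ta he S v C" "wgain \<gamma> C = 1"
    from unit_z[OF SA C] gz have "wcost c \<gamma> C < 0" by blast
    then show ?thesis using cycle_mono[OF C(1) SA] C(2) unfolding has_neg_unit_gain_cycle_def by blast
  next
    fix v w C P D assume h: "is_cycle ta he S v C" "wgain \<gamma> C > 1" "is_cycle ta he S w D"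
      "wgain \<gamma> D < 1" "is_path ta he S v P w"
    from bic_z[OF SA h] gz have "wcost c \<gamma> P + wgain \<gamma> P * (wcost c \<gamma> D / (1 - wgain \<gamma> D))
            < - wcost c \<gamma> C / (wgain \<gamma> C - 1)" by blast
    then show ?thesis using cycle_mono[OF h(1) SA] cycle_mono[OF h(3) SA] path_mono[OF h(5) SA] h
      unfolding has_neg_bicycle_def by blast
  next
    fix v C P assume h: "is_cycle ta he S v C" "wgain \<gamma> C > 1" "is_path ta he S v P u"
    from du_z[OF SA h] gz have "wcost c \<gamma> C + (wgain \<gamma> C - 1) * (wcost c \<gamma> P + wgain \<gamma> P * \<delta>) < 0"
      by blast
    then show ?thesis using cycle_mono[OF h(1) SA] path_mono[OF h(3) SA] h
      unfolding has_du_neg_fg_cycle_def by blast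
  qed
  then show "DD \<noteq> {} \<and> (has_neg_unit_gain_cycle ta he AA c \<gamma> \<or> has_neg_bicycle ta he AA c \<gamma>
      \<or> has_du_neg_fg_cycle ta he AA c \<gamma> \<delta> u)" using DDne by blast
next
  assume h: "DD \<noteq> {} \<and> (has_neg_unit_gain_cycle ta he AA c \<gamma> \<or> has_neg_bicycle ta he AA c \<gamma>
      \<or> has_du_neg_fg_cycle ta he AA c \<gamma> \<delta> u)"
  then obtain x0 where x0: "x0 \<in> DD" by blast
  have AA: "AA \<subseteq> AA" by simp
  have "\<exists>z. KK z \<and> (\<forall>f. z f \<ge> 0) \<and> gg z < 0"
    using h
  proof (elim conjE disjE)
    assume "has_neg_unit_gain_cycle ta he AA c \<gamma>"
    then obtain v C where C: "is_cycle ta he AA v C" "wgain \<gamma> C = 1" "wcost c \<gamma> C < 0"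
      unfolding has_neg_unit_gain_cycle_def by blast
    show ?thesis using unit_z[OF AA C(1,2)] C(3) by blast
  next
    assume "has_neg_bicycle ta he AA c \<gamma>"
    then obtain v w C P D where B: "is_cycle ta he AA v C" "wgain \<gamma> C > 1"
      "is_cycle ta he AA w D" "wgain \<gamma> D < 1" "is_path ta he AA v P w"
      "wcost c \<gamma> P + wgain \<gamma> P * (wcost c \<gamma> D / (1 - wgain \<gamma> D)) < - wcost c \<gamma> C / (wgain \<gamma> C - 1)"
      unfolding has_neg_bicycle_def by blast
    show ?thesis using bic_z[OF AA B(1-5)] B(6) by blast
  next
    assume "has_du_neg_fg_cycle ta he AA c \<gamma> \<delta> u"
    then obtain v C P where B: "is_cycle ta he AA v C" "wgain \<gamma> C > 1" "is_path ta he AA v P u"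
      "wcost c \<gamma> C + (wgain \<gamma> C - 1) * (wcost c \<gamma> P + wgain \<gamma> P * \<delta>) < 0"
      unfolding has_du_neg_fg_cycle_def by blast
    show ?thesis using du_z[OF AA B(1-3)] B(4) by blast
  qed
  then obtain z where z: "KK z" "\<forall>f. z f \<ge> 0" "gg z < 0" by blast
  show "fval V E ta he c \<gamma> u \<delta> = -\<infinity>"
    unfolding fval_eq
  proof (rule ccontr)
    assume "(INF x\<in>DD. ereal (gg x - \<delta>)) \<noteq> -\<infinity>"
    then obtain b where b: "b > -\<infinity>" "\<forall>x\<in>DD. b \<le> ereal (gg x - \<delta>)"
      unfolding INF_eq_minf by blast
    have "b \<le> ereal (gg x0 - \<delta>)" using b x0 by blast
    then obtain r where r: "b = ereal r" using b(1) by (cases b) auto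
    define t where "t = (\<bar>gg x0\<bar> + \<bar>r\<bar> + \<bar>\<delta>\<bar> + 1) / (- gg z)"
    have t0: "t \<ge> 0" unfolding t_def using z(3) by (intro divide_nonneg_pos) auto
    have tz: "t * gg z = - (\<bar>gg x0\<bar> + \<bar>r\<bar> + \<bar>\<delta>\<bar> + 1)" unfolding t_def using z(3) by simp
    have "(\<lambda>e. x0 e + t * z e) \<in> DD"
      using DD_add[OF x0 z(1)] DD_nonneg[OF x0] z(2) t0 by (simp add: add_nonneg_nonneg)
    then have "ereal r \<le> ereal (gg (\<lambda>e. x0 e + t * z e) - \<delta>)" using b(2) r by blast
    then have "r \<le> gg x0 + t * gg z - \<delta>" unfolding gg_add by simp
    then show False unfolding tz by linarith
  qed
qed

end

theorem lemma4p6: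
  fixes V :: "'v set" and E :: "'e set" and tail head :: "'e \<Rightarrow> 'v"
    and c \<gamma> :: "'e \<Rightarrow> real" and u :: 'v and \<delta> :: real
  assumes "finite V" "finite E"
    and "\<forall>e\<in>E. tail e \<in> V \<and> head e \<in> V"
    and "\<forall>e\<in>E. \<gamma> e > 0"
    and "u \<in> V"
  shows "fval V E tail head c \<gamma> u \<delta> = -\<infinity> \<longleftrightarrow>
     (Dset V E tail head \<gamma> u \<noteq> {} \<and>
       (let A = {e\<in>E. tail e \<noteq> u} in
         has_neg_unit_gain_cycle tail head A c \<gamma>
         \<or> has_neg_bicycle tail head A c \<gamma>
         \<or> has_du_neg_fg_cycle tail head A c \<gamma> \<delta> u))"
proof -
  interpret gctx V E tail head c \<gamma> u \<delta> using assms by unfold_locales auto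
  show ?thesis using main_iff by (simp add: Let_def)
qed


end
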